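(* Let $r\ge 2$, $n\ge1$ and $\underline m=(m_0,m_1,m_2,m_3)\in\mathbb N^4$ with $\gcd(m_\ell,r)=n$ for a single $\ell\in\{0,1,2,3\}$ and $\gcd(m_i,r)=1$ for $i\ne\ell$. Let $t\in\{0,\dots,n-1\}$. (1) If $i<\ell$, the number of admissible paths from $(v_i,0)$ to $(v_\ell,t)$ all of whose vertices lie in levels $i$ and $\ell$ is $\frac rn$. (2) If $i>\ell$, the number of admissible paths from $(v_\ell,t)$ to $(v_i,0)$ all of whose vertices lie in levels $\ell$ and $i$ is $\frac rn$.
   Context: Let $r\ge 2$ and $N\ge 0$ be integers and $\underline m=(m_0,\dots,m_N)\in\mathbb N^{N+1}$. The skew product graph $L_{2N+1}\times_{\underline m}\mathbb Z_r$ is the directed graph with vertices $(v_i,k)$, $0\le i\le N$, $k\in\mathbb Z_r=\{0,1,\dots,r-1\}$, and edges $(e_{ij},k)$ for $0\le i\le j\le N$, $k\in\mathbb Z_r$, the edge $(e_{ij},k)$ having source $(v_i,k-m_i \bmod r)$ and range $(v_j,k)$. The vertices $(v_i,k)$, $k\in\mathbb Z_r$, form level $i$. A vertex $(v_l,k)$ is called distinguished if $0\le k<\gcd(m_l,r)$. For distinguished vertices $(v_i,s),(v_j,t)$, an admissible path from $(v_i,s)$ to $(v_j,t)$ is a finite path of positive length in the skew product graph with source $(v_i,s)$ and range $(v_j,t)$ none of whose vertices other than its source and range is distinguished. Here $N=3$. *)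

theory Defs
  imports Complex_Main
begin

text \<open>Skew product graph L_{2N+1} x_m Z_r.
  Vertex (v_l,k) is the pair (l,k) with l \<le> N, k < r.
  Edge (e_ij,k) is the triple (i,j,k) with i \<le> j \<le> N, k < r.\<close>

type_synonym vert = "nat \<times> nat"
type_synonym edge = "nat \<times> nat \<times> nat"

definition sp_edges :: "nat \<Rightarrow> nat \<Rightarrow> edge set" where
  "sp_edges N r = {(i,j,k). i \<le> j \<and> j \<le> N \<and> k < r}"

definition sp_src :: "nat \<Rightarrow> (nat \<Rightarrow> nat) \<Rightarrow> edge \<Rightarrow> vert" where
  "sp_src r m e = (case e of (i,j,k) \<Rightarrow> (i, nat ((int k - int (m i)) mod int r)))"

definition sp_rng :: "edge \<Rightarrow> vert" where
  "sp_rng e = (case e of (i,j,k) \<Rightarrow> (j,k))"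

definition sp_path :: "nat \<Rightarrow> nat \<Rightarrow> (nat \<Rightarrow> nat) \<Rightarrow> edge list \<Rightarrow> bool" where
  "sp_path N r m p \<longleftrightarrow> p \<noteq> [] \<and> set p \<subseteq> sp_edges N r \<and>
     (\<forall>q. Suc q < length p \<longrightarrow> sp_rng (p ! q) = sp_src r m (p ! Suc q))"

definition path_source :: "nat \<Rightarrow> (nat \<Rightarrow> nat) \<Rightarrow> edge list \<Rightarrow> vert" where
  "path_source r m p = sp_src r m (hd p)"

definition path_range :: "edge list \<Rightarrow> vert" where
  "path_range p = sp_rng (last p)"

definition path_vertices :: "nat \<Rightarrow> (nat \<Rightarrow> nat) \<Rightarrow> edge list \<Rightarrow> vert set" where
  "path_vertices r m p = sp_src r m ` set p \<union> sp_rng ` set p"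

definition interior_vertices :: "edge list \<Rightarrow> vert set" where
  "interior_vertices p = {sp_rng (p ! q) | q. Suc q < length p}"

definition distinguished :: "nat \<Rightarrow> (nat \<Rightarrow> nat) \<Rightarrow> vert \<Rightarrow> bool" where
  "distinguished r m v \<longleftrightarrow> snd v < gcd (m (fst v)) r"

definition admissible ::
  "nat \<Rightarrow> nat \<Rightarrow> (nat \<Rightarrow> nat) \<Rightarrow> vert \<Rightarrow> vert \<Rightarrow> edge list \<Rightarrow> bool" where
  "admissible N r m u w p \<longleftrightarrow>
     sp_path N r m p \<and> path_source r m p = u \<and> path_range p = w \<and>
     (\<forall>x \<in> interior_vertices p. \<not> distinguished r m x)"

end

theory Submission imports Defs "HOL-Number_Theory.Cong" begin

lemma src_step:
  assumes "r > 0" "x < r"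
  shows "sp_src r m (j, c, (x + m j) mod r) = (j, x)"
proof -
  have "int ((x + m j) mod r) = (int x + int (m j)) mod int r"
    by (simp add: of_nat_mod)
  hence "(int ((x + m j) mod r) - int (m j)) mod int r = int x mod int r"
    by (metis add_diff_cancel_right' mod_diff_left_eq)
  also have "\<dots> = int x" using assms by simp
  finally show ?thesis by (simp add: sp_src_def)
qed

lemma src_inv:
  assumes "r > 0" "k2 < r" "sp_src r m (j,c,k2) = (j', x)"
  shows "j' = j \<and> x < r \<and> k2 = (x + m j) mod r"
proof -
  have j: "j' = j" and x: "x = nat ((int k2 - int (m j)) mod int r)"
    using assms(3) by (auto simp: sp_src_def)
  have xr: "x < r" using x assms(1) by (simp add: nat_less_iff)
  have "int x = (int k2 - int (m j)) mod int r" using x assms(1) by simp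
  hence "(int x + int (m j)) mod int r = int k2 mod int r"
    by (metis add_diff_cancel_right' diff_add_cancel mod_add_left_eq)
  hence "int ((x + m j) mod r) = int k2" using assms(2) by (simp add: of_nat_mod)
  thus ?thesis using j xr by linarith
qed

lemma modstep: "(x + Suc j * M) mod (r::nat) = ((x + j * M) mod r + M) mod r"
  by (metis add.assoc mod_add_left_eq mult_Suc add.commute)

lemma nonret:
  fixes r M s j :: nat
  assumes "r > 0" "0 < j" "j < r div gcd M r"
  shows "(s + j*M) mod r \<noteq> s mod r"
proof
  assume "(s + j*M) mod r = s mod r"
  hence "r dvd j*M"
    by (metis add_0_right mod_add_left_eq mod_0_imp_dvd mod_add_cong mod_mod_trivial add.commute
      mod_add_eq mod_mult_self1 cong_def cong_add_lcancel_0_nat cong_0_iff)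
  moreover have "r dvd j*r" by simp
  ultimately have "r dvd gcd (j*M) (j*r)" by simp
  hence d: "r dvd j * gcd M r" by (simp add: gcd_mult_distrib_nat)
  define g where "g = gcd M r"
  have gp: "g > 0" using assms(1) g_def by simp
  have "r = g * (r div g)" using g_def by simp
  hence "g * (r div g) dvd g * j" using d g_def by (metis mult.commute)
  hence "r div g dvd j" using gp by simp
  hence "r div g \<le> j" using assms(2) by (simp add: dvd_imp_le)
  thus False using assms(3) g_def by simp
qed

lemma ret:
  fixes r M s :: nat
  shows "(s + (r div gcd M r) * M) mod r = s mod r"
proof -
  have "(r div gcd M r) * M = r * (M div gcd M r)"
    by (metis dvd_div_mult dvd_mult_div_cancel gcd_dvd1 gcd_dvd2 mult.commute div_mult_swap)
  thus ?thesis by simp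
qed

lemma modg:
  fixes r M x j :: nat
  shows "((x + j*M) mod r) mod gcd M r = x mod gcd M r"
proof -
  have "((x + j*M) mod r) mod gcd M r = (x + j*M) mod gcd M r"
    by (simp add: mod_mod_cancel)
  also have "\<dots> = x mod gcd M r"
    by (metis dvd_mult gcd_dvd1 mod_add_self2 dvd_def mod_add_cong mod_mod_trivial mult.commute mod_mult_self2)
  finally show ?thesis .
qed

lemma hit_exists:
  fixes r M y u :: nat
  assumes "r > 0" "y mod gcd M r = u"
  shows "\<exists>b. (y + b*M) mod r = u"
proof (cases "M = 0")
  case True
  thus ?thesis using assms by (intro exI[of _ 0]) simp
next
  case False
  define g where "g = gcd M r"
  obtain x z where xz: "M * x = r * z + g" using bezout_nat[OF False, of r] g_def by auto
  define d where "d = y div g"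
  have y: "y = u + g*d" using assms(2) g_def d_def by (metis div_mult_mod_eq add.commute mult.commute)
  have ur: "u < r" using assms g_def
    by (metis False gcd_le2_nat gcd_nat.eq_neutr_iff less_le_trans mod_less_divisor not_gr0)
  obtain r' where r': "r = Suc r'" using assms(1) gr0_implies_Suc by blast
  have "y + (x*d*r')*M = u + r*(d*g + d*r'*z)"
  proof -
    have "y + (x*d*r')*M = u + g*d + d*r'*(M*x)" using y by (simp add: algebra_simps)
    also have "\<dots> = u + g*d + d*r'*(r*z+g)" using xz by simp
    also have "\<dots> = u + r*(d*g + d*r'*z)" using r' by (simp add: algebra_simps)
    finally show ?thesis .
  qed
  hence "(y + (x*d*r')*M) mod r = u" using ur by simp
  thus ?thesis by blast
qed


definition yv :: "nat \<Rightarrow> (nat \<Rightarrow> nat) \<Rightarrow> nat \<Rightarrow> nat \<Rightarrow> nat \<Rightarrow> nat" where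
  "yv r m a s q = (s + (q+1) * m a) mod r"

definition EE :: "nat \<Rightarrow> (nat \<Rightarrow> nat) \<Rightarrow> nat \<Rightarrow> nat \<Rightarrow> nat \<Rightarrow> nat \<Rightarrow> nat \<Rightarrow> edge" where
  "EE r m a c s q k = (if k < q then (a, a, (s + (k+1) * m a) mod r)
     else if k = q then (a, c, (s + (k+1) * m a) mod r)
     else (c, c, (yv r m a s q + (k - q) * m c) mod r))"

definition FF :: "nat \<Rightarrow> (nat \<Rightarrow> nat) \<Rightarrow> nat \<Rightarrow> nat \<Rightarrow> nat \<Rightarrow> nat \<Rightarrow> nat \<Rightarrow> edge list" where
  "FF r m a c s q b = map (EE r m a c s q) [0..<q+1+b]"

definition cnd :: "nat \<Rightarrow> (nat \<Rightarrow> nat) \<Rightarrow> nat \<Rightarrow> nat \<Rightarrow> nat \<Rightarrow> nat \<Rightarrow> nat \<Rightarrow> nat \<Rightarrow> bool" where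
  "cnd r m a c s u q b \<longleftrightarrow> (yv r m a s q + b * m c) mod r = u \<and>
      (\<forall>b'<b. (yv r m a s q + b' * m c) mod r \<noteq> u)"

context
  fixes r :: nat and m :: "nat \<Rightarrow> nat" and a c s u :: nat
  assumes r0: "r > 0" and ac: "a < c" and c3: "c \<le> 3"
    and sg: "s < gcd (m a) r" and ug: "u < gcd (m c) r"
begin

lemma sr: "s < r" using gcd_le2_nat[of r "m a"] sg r0 by linarith
lemma ur: "u < r" using gcd_le2_nat[of r "m c"] ug r0 by linarith

lemma rng_ge: "q \<le> k \<Longrightarrow> sp_rng (EE r m a c s q k) = (c, (yv r m a s q + (k - q) * m c) mod r)"
  by (cases "k = q") (auto simp: EE_def sp_rng_def yv_def)

lemma rng_lt: "k < q \<Longrightarrow> sp_rng (EE r m a c s q k) = (a, (s + (k+1) * m a) mod r)"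
  by (auto simp: EE_def sp_rng_def)

lemma chain: "sp_rng (EE r m a c s q k) = sp_src r m (EE r m a c s q (Suc k))"
proof -
  consider "Suc k < q" | "Suc k = q" | "k = q" | "q < k" by linarith
  thus ?thesis
  proof cases
    case 1
    have "EE r m a c s q (Suc k) = (a, a, ((s + (k+1) * m a) mod r + m a) mod r)"
      using 1 modstep[of s "k+1" "m a" r] by (simp add: EE_def)
    thus ?thesis using 1 src_step[OF r0, of "(s + (k+1) * m a) mod r" m a a] r0 rng_lt[of k q]
      by simp
  next
    case 2
    have "EE r m a c s q (Suc k) = (a, c, ((s + (k+1) * m a) mod r + m a) mod r)"
      using 2 modstep[of s "k+1" "m a" r] by (simp add: EE_def)
    thus ?thesis using 2 src_step[OF r0, of "(s + (k+1) * m a) mod r" m a c] r0 rng_lt[of k q]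
      by simp
  next
    case 3
    have "EE r m a c s q (Suc k) = (c, c, (yv r m a s q + m c) mod r)"
      using 3 by (simp add: EE_def)
    moreover have "yv r m a s q < r" using r0 by (simp add: yv_def)
    ultimately show ?thesis using 3 src_step[OF r0, of "yv r m a s q" m c c] rng_ge[of q k]
      by simp
  next
    case 4
    have "EE r m a c s q (Suc k) = (c, c, ((yv r m a s q + (k-q) * m c) mod r + m c) mod r)"
      using 4 modstep[of "yv r m a s q" "k-q" "m c" r] by (simp add: EE_def Suc_diff_le)
    thus ?thesis using 4 src_step[OF r0, of "(yv r m a s q + (k-q) * m c) mod r" m c c] r0 rng_ge[of q k]
      by simp
  qed
qed


lemma EE_edge: "EE r m a c s q k \<in> sp_edges 3 r"
  using ac c3 r0 by (auto simp: EE_def sp_edges_def)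

lemma EE_lev: "fst (EE r m a c s q k) \<in> {a,c} \<and> fst (snd (EE r m a c s q k)) \<in> {a,c}"
  by (auto simp: EE_def)

lemma forward:
  assumes q: "q < r div gcd (m a) r" and cb: "cnd r m a c s u q b"
  shows "admissible 3 r m (a,s) (c,u) (FF r m a c s q b) \<and>
         (\<forall>x \<in> path_vertices r m (FF r m a c s q b). fst x \<in> {a,c})"
proof -
  let ?p = "FF r m a c s q b"
  let ?E = "EE r m a c s q"
  let ?y = "yv r m a s q"
  have len: "length ?p = q+1+b" by (simp add: FF_def)
  have nth: "\<And>k. k < q+1+b \<Longrightarrow> ?p ! k = ?E k" by (simp add: FF_def del: upt_Suc)
  have hit: "(?y + b * m c) mod r = u" and mn: "\<And>b'. b' < b \<Longrightarrow> (?y + b' * m c) mod r \<noteq> u"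
    using cb by (auto simp: cnd_def)
  have path: "sp_path 3 r m ?p"
    unfolding sp_path_def using len nth chain EE_edge
    by (auto simp: FF_def simp del: upt_Suc)
  have src: "path_source r m ?p = (a,s)"
  proof -
    have "hd ?p = ?E 0" proof -
      have "?p \<noteq> []" using len by auto
      moreover have "?p ! 0 = ?E 0" using nth[of 0] by simp
      ultimately show ?thesis by (metis hd_conv_nth)
    qed
    moreover have "?E 0 = (a, (if q = 0 then c else a), (s + m a) mod r)"
      by (simp add: EE_def)
    ultimately show ?thesis using src_step[OF r0 sr, of m a] unfolding path_source_def
      by simp
  qed
  have rng: "path_range ?p = (c,u)"
  proof -
    have pn: "?p \<noteq> []" using len by auto
    have "last ?p = ?p ! (q+b)" using last_conv_nth[OF pn] len by simp
    hence "last ?p = ?E (q+b)" using nth[of "q+b"] by simp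
    thus ?thesis using rng_ge[of q "q+b"] hit by (simp add: path_range_def)
  qed
  have int: "\<forall>x \<in> interior_vertices ?p. \<not> distinguished r m x"
  proof
    fix x assume "x \<in> interior_vertices ?p"
    then obtain k where k: "Suc k < q+1+b" and x: "x = sp_rng (?E k)"
      using len nth unfolding interior_vertices_def by auto
    show "\<not> distinguished r m x"
    proof (cases "k < q")
      case True
      have ne: "(s + (k+1) * m a) mod r \<noteq> s mod r"
        using nonret[OF r0, of "k+1" "m a" s] True q by simp
      have "((s + (k+1) * m a) mod r) mod gcd (m a) r = s"
        using modg[of s "k+1" "m a" r] sg by simp
      hence "\<not> (s + (k+1) * m a) mod r < gcd (m a) r" using ne sr by auto
      thus ?thesis using x rng_lt[OF True] by (simp add: distinguished_def)
    next
      case False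
      have kb: "k - q < b" using k False by linarith
      have ne: "(?y + (k-q) * m c) mod r \<noteq> u" using mn[OF kb] .
      have "((?y + (k-q) * m c) mod r) mod gcd (m c) r = ?y mod gcd (m c) r"
        using modg by simp
      also have "\<dots> = u mod gcd (m c) r" using modg[of ?y b "m c" r] hit by simp
      also have "\<dots> = u" using ug by simp
      finally have "\<not> (?y + (k-q) * m c) mod r < gcd (m c) r" using ne by auto
      thus ?thesis using x rng_ge[of q k] False by (simp add: distinguished_def)
    qed
  qed
  have lv: "\<forall>x \<in> path_vertices r m ?p. fst x \<in> {a,c}"
  proof
    fix x assume "x \<in> path_vertices r m ?p"
    then obtain e where e: "e \<in> set ?p" and "x = sp_src r m e \<or> x = sp_rng e"
      unfolding path_vertices_def by auto
    moreover obtain k where "e = ?E k" using e by (auto simp: FF_def)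
    ultimately show "fst x \<in> {a,c}" using EE_lev[of q k]
      by (auto simp: sp_src_def sp_rng_def split: prod.splits)
  qed
  show ?thesis using path src rng int lv by (simp add: admissible_def)
qed

lemma backward:
  assumes adm: "admissible 3 r m (a,s) (c,u) p"
    and lv: "\<forall>x \<in> path_vertices r m p. fst x \<in> {a,c}"
  shows "\<exists>q b. q < r div gcd (m a) r \<and> cnd r m a c s u q b \<and> p = FF r m a c s q b"
proof -
  define n where "n = length p"
  define l1 where "l1 k = fst (p ! k)" for k
  define l2 where "l2 k = fst (snd (p ! k))" for k
  define kk where "kk k = snd (snd (p ! k))" for k
  have P: "sp_path 3 r m p" and S: "sp_src r m (hd p) = (a,s)" and R: "sp_rng (last p) = (c,u)"
    and I: "\<forall>x \<in> interior_vertices p. \<not> distinguished r m x"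
    using adm unfolding admissible_def path_source_def path_range_def by auto
  have ne: "p \<noteq> []" and edges: "set p \<subseteq> sp_edges 3 r"
    and ch: "\<And>k. Suc k < n \<Longrightarrow> sp_rng (p ! k) = sp_src r m (p ! Suc k)"
    using P unfolding sp_path_def n_def by auto
  have src: "sp_src r m (p ! 0) = (a,s)" using S ne by (simp add: hd_conv_nth)
  have rng: "sp_rng (p ! (n - 1)) = (c,u)" using R ne n_def by (simp add: last_conv_nth)
  have int: "\<And>k. Suc k < n \<Longrightarrow> \<not> distinguished r m (sp_rng (p ! k))"
  proof -
    fix k assume "Suc k < n"
    hence "sp_rng (p ! k) \<in> interior_vertices p" unfolding interior_vertices_def n_def by blast
    thus "\<not> distinguished r m (sp_rng (p ! k))" using I by blast
  qed
  have n0: "n > 0" using ne n_def by simp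
  have pk: "\<And>k. p ! k = (l1 k, l2 k, kk k)" by (simp add: l1_def l2_def kk_def)
  have ed: "\<And>k. k < n \<Longrightarrow> l1 k \<le> l2 k \<and> kk k < r"
  proof -
    fix k assume "k < n"
    hence "p ! k \<in> sp_edges 3 r" using edges n_def by auto
    thus "l1 k \<le> l2 k \<and> kk k < r" by (auto simp: sp_edges_def l1_def l2_def kk_def)
  qed
  have lvk: "\<And>k. k < n \<Longrightarrow> l1 k \<in> {a,c} \<and> l2 k \<in> {a,c}"
  proof -
    fix k assume "k < n"
    hence e: "p ! k \<in> set p" using n_def by simp
    have "sp_src r m (p!k) \<in> path_vertices r m p" "sp_rng (p!k) \<in> path_vertices r m p"
      using e by (auto simp: path_vertices_def)
    moreover have "fst (sp_src r m (p!k)) = l1 k" "fst (sp_rng (p!k)) = l2 k"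
      by (simp_all add: sp_src_def sp_rng_def l1_def l2_def split: prod.splits)
    ultimately show "l1 k \<in> {a,c} \<and> l2 k \<in> {a,c}" using lv by metis
  qed
  have chk: "\<And>k. Suc k < n \<Longrightarrow> l1 (Suc k) = l2 k \<and> kk (Suc k) = (kk k + m (l1 (Suc k))) mod r"
  proof -
    fix k assume k: "Suc k < n"
    have "sp_src r m (l1 (Suc k), l2 (Suc k), kk (Suc k)) = (l2 k, kk k)"
      using ch[OF k] pk[of k] pk[of "Suc k"] by (simp add: sp_rng_def)
    from src_inv[OF r0 _ this] ed[OF k]
    show "l1 (Suc k) = l2 k \<and> kk (Suc k) = (kk k + m (l1 (Suc k))) mod r" by auto
  qed
  have st: "l1 0 = a \<and> kk 0 = (s + m a) mod r"
    using src_inv[OF r0 _, of "kk 0" m "l1 0" "l2 0" a s] src pk[of 0] ed[OF n0] by auto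
  have en: "l2 (n-1) = c \<and> kk (n-1) = u" using rng pk[of "n-1"] by (simp add: sp_rng_def)
  define q where "q = (LEAST k. l2 k = c)"
  have en1: "l2 (n-1) = c" using en by simp
  have q1: "l2 q = c" unfolding q_def using en1 by (rule LeastI)
  have "q \<le> n - 1" unfolding q_def using en1 by (rule Least_le)
  hence qn: "q < n" using n0 by linarith
  have qlt: "\<And>k. k < q \<Longrightarrow> l2 k = a"
  proof -
    fix k assume "k < q"
    hence "l2 k \<noteq> c" using q_def not_less_Least by blast
    thus "l2 k = a" using lvk[of k] \<open>k < q\<close> qn by auto
  qed
  have l1le: "\<And>k. k \<le> q \<Longrightarrow> l1 k = a"
  proof -
    fix k assume k: "k \<le> q"
    show "l1 k = a"
    proof (cases k)
      case 0 thus ?thesis using st by simp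
    next
      case (Suc j) thus ?thesis using chk[of j] qlt[of j] k qn by simp
    qed
  qed
  have gt: "\<And>k. q < k \<Longrightarrow> k < n \<Longrightarrow> l1 k = c \<and> l2 k = c"
  proof -
    fix k show "q < k \<Longrightarrow> k < n \<Longrightarrow> l1 k = c \<and> l2 k = c"
    proof (induction k)
      case 0 thus ?case by simp
    next
      case (Suc k)
      have "l1 (Suc k) = c"
      proof (cases "k = q")
        case True thus ?thesis using chk[of k] q1 Suc.prems by simp
      next
        case False thus ?thesis using chk[of k] Suc by simp
      qed
      moreover have "l2 (Suc k) \<in> {a,c}" "l1 (Suc k) \<le> l2 (Suc k)"
        using lvk[OF Suc.prems(2)] ed[OF Suc.prems(2)] by auto
      ultimately show ?case using ac by auto
    qed
  qed
  have kle: "\<And>k. k \<le> q \<Longrightarrow> kk k = (s + (k+1) * m a) mod r"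
  proof -
    fix k show "k \<le> q \<Longrightarrow> kk k = (s + (k+1) * m a) mod r"
    proof (induction k)
      case 0 thus ?case using st by simp
    next
      case (Suc k)
      have "kk (Suc k) = (kk k + m a) mod r" using chk[of k] l1le[OF Suc.prems] Suc.prems qn by simp
      thus ?case using Suc modstep[of s "k+1" "m a" r] by simp
    qed
  qed
  let ?y = "yv r m a s q"
  have kge: "\<And>d. q + d < n \<Longrightarrow> kk (q+d) = (?y + d * m c) mod r"
  proof -
    fix d show "q + d < n \<Longrightarrow> kk (q+d) = (?y + d * m c) mod r"
    proof (induction d)
      case 0 thus ?case using kle[of q] by (simp add: yv_def)
    next
      case (Suc d)
      have "kk (q + Suc d) = (kk (q+d) + m c) mod r" using chk[of "q+d"] gt[of "q + Suc d"] Suc.prems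
        by simp
      thus ?case using Suc modstep[of ?y d "m c" r] by simp
    qed
  qed
  define b where "b = n - 1 - q"
  have nb: "n = q + 1 + b" using b_def qn by simp
  have qr: "q < r div gcd (m a) r"
  proof (rule ccontr)
    assume nq: "\<not> q < r div gcd (m a) r"
    define j where "j = r div gcd (m a) r"
    have jq: "j \<le> q" using nq j_def by simp
    have j0: "j > 0" using r0 j_def
      by (metis div_greater_zero_iff gcd_le2_nat gcd_pos_nat not_gr0)
    have "Suc (j - 1) < n" using jq qn j0 by simp
    hence nd: "\<not> distinguished r m (sp_rng (p ! (j-1)))" using int by blast
    have "sp_rng (p ! (j-1)) = (a, (s + j * m a) mod r)"
      using pk[of "j-1"] qlt[of "j-1"] kle[of "j-1"] jq j0 by (simp add: sp_rng_def)
    also have "\<dots> = (a, s)" using ret[of s r "m a"] sr j_def by simp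
    finally show False using nd sg by (simp add: distinguished_def)
  qed
  have hit: "(?y + b * m c) mod r = u" using kge[of b] en nb by simp
  have mn: "\<forall>b'<b. (?y + b' * m c) mod r \<noteq> u"
  proof (intro allI impI)
    fix b' assume bb: "b' < b"
    hence "Suc (q+b') < n" using nb by simp
    hence nd: "\<not> distinguished r m (sp_rng (p ! (q+b')))" using int by blast
    have "sp_rng (p ! (q+b')) = (c, (?y + b' * m c) mod r)"
      using pk[of "q+b'"] kge[of b'] gt[of "q+b'"] q1 nb bb
      by (cases b') (auto simp: sp_rng_def)
    thus "(?y + b' * m c) mod r \<noteq> u" using nd ug by (auto simp: distinguished_def)
  qed
  have "p = FF r m a c s q b"
  proof (rule nth_equalityI)
    show "length p = length (FF r m a c s q b)" using nb n_def by (simp add: FF_def)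
  next
    fix k assume "k < length p"
    hence kn: "k < n" using n_def by simp
    have "FF r m a c s q b ! k = EE r m a c s q k" using kn nb by (simp add: FF_def del: upt_Suc)
    moreover have "p ! k = EE r m a c s q k"
    proof -
      consider "k < q" | "k = q" | "q < k" by linarith
      thus ?thesis
      proof cases
        case 1 thus ?thesis using pk[of k] l1le[of k] qlt[of k] kle[of k] by (simp add: EE_def)
      next
        case 2 thus ?thesis using pk[of k] l1le[of k] q1 kle[of k] by (simp add: EE_def)
      next
        case 3 thus ?thesis using pk[of k] gt[OF 3 kn] kge[of "k-q"] kn by (simp add: EE_def)
      qed
    qed
    ultimately show "p ! k = FF r m a c s q b ! k" by simp
  qed
  thus ?thesis using qr hit mn by (auto simp: cnd_def)
qed

end

lemma count_mod:
  fixes n r t :: nat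
  assumes n0: "0 < n" and nd: "n dvd r" and tn: "t < n"
  shows "card {x. x < r \<and> x mod n = t} = r div n"
proof -
  obtain k where rk: "r = n * k" using nd by (auto simp: dvd_def)
  have rdk: "r div n = k" using rk n0 by simp
  have "{x. x < r \<and> x mod n = t} = (\<lambda>j. t + n*j) ` {..<k}"
  proof (intro set_eqI iffI)
    fix x assume x: "x \<in> {x. x < r \<and> x mod n = t}"
    hence xr: "x < r" and xm: "x mod n = t" by auto
    have "x = t + n * (x div n)" using div_mult_mod_eq[of x n] xm by (simp add: algebra_simps)
    moreover have "x div n < k" using xr rk by (simp add: less_mult_imp_div_less mult.commute)
    ultimately show "x \<in> (\<lambda>j. t + n*j) ` {..<k}" by blast
  next
    fix x assume "x \<in> (\<lambda>j. t + n*j) ` {..<k}"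
    then obtain j where j: "j < k" "x = t + n*j" by auto
    have "n * (j+1) \<le> n * k" using j(1) by (intro mult_le_mono2) simp
    hence "x < r" using j tn rk by (simp add: distrib_left)
    moreover have "x mod n = t" using j tn by simp
    ultimately show "x \<in> {x. x < r \<and> x mod n = t}" by simp
  qed
  moreover have "inj_on (\<lambda>j. t + n*j) {..<k}" using n0 by (auto simp: inj_on_def)
  ultimately show ?thesis using rdk by (simp add: card_image)
qed

lemma count1:
  fixes M r n t :: nat
  assumes cp: "coprime M r" and r0: "0 < r" and "0 < n" "n dvd r" "t < n"
  shows "card {q. q < r \<and> ((q+1)*M) mod r mod n = t} = r div n"
proof -
  define phi where "phi q = ((q+1)*M) mod r" for q
  have inj: "inj_on phi {..<r}"
  proof (rule inj_onI)
    fix x y assume x: "x \<in> {..<r}" and y: "y \<in> {..<r}" and e: "phi x = phi y"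
    hence "[(x+1)*M = (y+1)*M] (mod r)" by (simp add: phi_def cong_def)
    hence "[x+1 = y+1] (mod r)" using cong_mult_rcancel_nat[OF cp] by blast
    hence "[x = y] (mod r)" by (metis cong_add_rcancel_nat)
    thus "x = y" using x y by (simp add: cong_def)
  qed
  have im: "phi ` {..<r} = {..<r}"
    by (rule endo_inj_surj) (use inj r0 in \<open>auto simp: phi_def\<close>)
  define A where "A = {q. q < r \<and> phi q mod n = t}"
  have "phi ` A = {x. x < r \<and> x mod n = t}"
  proof (intro set_eqI iffI)
    fix x assume "x \<in> phi ` A" thus "x \<in> {x. x < r \<and> x mod n = t}"
      using r0 by (auto simp: A_def phi_def)
  next
    fix x assume x: "x \<in> {x. x < r \<and> x mod n = t}"
    hence "x \<in> phi ` {..<r}" using im by simp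
    then obtain q where "q < r" "x = phi q" by auto
    thus "x \<in> phi ` A" using x by (auto simp: A_def)
  qed
  moreover have "inj_on phi A" using inj by (rule inj_on_subset) (auto simp: A_def)
  ultimately have "card A = card {x. x < r \<and> x mod n = t}" by (metis card_image)
  also have "\<dots> = r div n" using count_mod assms by blast
  finally show ?thesis by (simp add: A_def phi_def)
qed

context
  fixes r :: nat and m :: "nat \<Rightarrow> nat" and a c s u :: nat
  assumes r0: "r > 0" and ac: "a < c" and c3: "c \<le> 3"
    and sg: "s < gcd (m a) r" and ug: "u < gcd (m c) r"
begin

lemma FF_inj: "FF r m a c s q b = FF r m a c s q' b' \<Longrightarrow> q = q'"
proof (rule ccontr)
  assume e: "FF r m a c s q b = FF r m a c s q' b'" and ne: "q \<noteq> q'"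
  have "\<And>q q' b b'. q < q' \<Longrightarrow> FF r m a c s q b = FF r m a c s q' b' \<Longrightarrow> False"
  proof -
    fix q q' b b' assume l: "q < q'" and e: "FF r m a c s q b = FF r m a c s q' b'"
    have "FF r m a c s q b ! q = EE r m a c s q q" by (simp add: FF_def del: upt_Suc)
    moreover have "FF r m a c s q' b' ! q = EE r m a c s q' q" using l
      by (simp add: FF_def del: upt_Suc)
    ultimately have "EE r m a c s q q = EE r m a c s q' q" using e by simp
    thus False using l ac by (simp add: EE_def)
  qed
  thus False using e ne by (metis linorder_neqE_nat)
qed

theorem card_S:
  "card {p. admissible 3 r m (a,s) (c,u) p \<and> (\<forall>x\<in>path_vertices r m p. fst x \<in> {a,c})}
   = card {q. q < r div gcd (m a) r \<and> yv r m a s q mod gcd (m c) r = u}"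
proof -
  define Q where "Q = {q. q < r div gcd (m a) r \<and> yv r m a s q mod gcd (m c) r = u}"
  define B where "B q = (LEAST b. (yv r m a s q + b * m c) mod r = u)" for q
  have Bc: "\<And>q. q \<in> Q \<Longrightarrow> cnd r m a c s u q (B q)"
  proof -
    fix q assume "q \<in> Q"
    hence "\<exists>b. (yv r m a s q + b * m c) mod r = u"
      using hit_exists[OF r0, of "yv r m a s q" "m c" u] by (simp add: Q_def)
    then obtain b0 where h0: "(yv r m a s q + b0 * m c) mod r = u" by blast
    have 1: "(yv r m a s q + B q * m c) mod r = u" unfolding B_def using h0 by (rule LeastI)
    have 2: "\<forall>b'<B q. (yv r m a s q + b' * m c) mod r \<noteq> u"
      unfolding B_def using not_less_Least by blast
    show "cnd r m a c s u q (B q)" unfolding cnd_def using 1 2 by blast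
  qed
  have cQ: "\<And>q b. cnd r m a c s u q b \<Longrightarrow> yv r m a s q mod gcd (m c) r = u"
  proof -
    fix q b assume "cnd r m a c s u q b"
    hence "(yv r m a s q + b * m c) mod r = u" by (simp add: cnd_def)
    hence "u mod gcd (m c) r = yv r m a s q mod gcd (m c) r"
      using modg[of "yv r m a s q" b "m c" r] by simp
    thus "yv r m a s q mod gcd (m c) r = u" using ug by simp
  qed
  have cB: "\<And>q b. cnd r m a c s u q b \<Longrightarrow> b = B q"
  proof -
    fix q b assume cb: "cnd r m a c s u q b"
    hence h: "(yv r m a s q + b * m c) mod r = u" by (simp add: cnd_def)
    hence le: "B q \<le> b" unfolding B_def by (rule Least_le)
    have hb: "(yv r m a s q + B q * m c) mod r = u" unfolding B_def using h by (rule LeastI)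
    have mn: "\<forall>b'<b. (yv r m a s q + b' * m c) mod r \<noteq> u" using cb by (simp add: cnd_def)
    show "b = B q"
    proof (rule ccontr)
      assume "b \<noteq> B q"
      hence "B q < b" using le by simp
      thus False using mn hb by blast
    qed
  qed
  have "{p. admissible 3 r m (a,s) (c,u) p \<and> (\<forall>x\<in>path_vertices r m p. fst x \<in> {a,c})}
        = (\<lambda>q. FF r m a c s q (B q)) ` Q"
  proof (intro set_eqI iffI)
    fix p assume "p \<in> {p. admissible 3 r m (a,s) (c,u) p \<and> (\<forall>x\<in>path_vertices r m p. fst x \<in> {a,c})}"
    then obtain q b where q: "q < r div gcd (m a) r" and cb: "cnd r m a c s u q b"
      and pe: "p = FF r m a c s q b"
      using backward[OF r0 ac c3 sg ug] by blast
    have "q \<in> Q" using q cQ[OF cb] by (simp add: Q_def)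
    moreover have "p = FF r m a c s q (B q)" using pe cB[OF cb] by simp
    ultimately show "p \<in> (\<lambda>q. FF r m a c s q (B q)) ` Q" by blast
  next
    fix p assume "p \<in> (\<lambda>q. FF r m a c s q (B q)) ` Q"
    then obtain q where q: "q \<in> Q" "p = FF r m a c s q (B q)" by auto
    thus "p \<in> {p. admissible 3 r m (a,s) (c,u) p \<and> (\<forall>x\<in>path_vertices r m p. fst x \<in> {a,c})}"
      using forward[OF r0 ac c3 sg ug, of q "B q"] Bc[OF q(1)] by (simp add: Q_def)
  qed
  moreover have "inj_on (\<lambda>q. FF r m a c s q (B q)) Q"
    by (rule inj_onI) (erule FF_inj)
  ultimately show ?thesis by (simp add: card_image Q_def)
qed

end

theorem lemma3p2:
  fixes r n l i t :: nat and m :: "nat \<Rightarrow> nat"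
  assumes "r \<ge> 2" and "n \<ge> 1" and "l \<le> 3" and "i \<le> 3"
    and "gcd (m l) r = n"
    and "\<And>j. j \<le> 3 \<Longrightarrow> j \<noteq> l \<Longrightarrow> gcd (m j) r = 1"
    and "t < n"
  shows "(i < l \<longrightarrow>
           real (card {p. admissible 3 r m (i, 0) (l, t) p \<and>
                          (\<forall>x \<in> path_vertices r m p. fst x \<in> {i, l})})
             = real r / real n)
       \<and> (l < i \<longrightarrow>
           real (card {p. admissible 3 r m (l, t) (i, 0) p \<and>
                          (\<forall>x \<in> path_vertices r m p. fst x \<in> {l, i})})
             = real r / real n)"
proof -
  have r0: "r > 0" using assms(1) by simp
  have nd: "n dvd r" using assms(5) by (metis gcd_dvd2)
  have n0: "n > 0" using assms(2) by simp
  have rr: "real (r div n) = real r / real n" using nd by (simp add: real_of_nat_div)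
  show ?thesis
  proof (intro conjI impI)
    assume il: "i < l"
    have gi: "gcd (m i) r = 1" using assms(6)[of i] il assms(4) by simp
    have "card {p. admissible 3 r m (i, 0) (l, t) p \<and> (\<forall>x \<in> path_vertices r m p. fst x \<in> {i, l})}
       = card {q. q < r div gcd (m i) r \<and> yv r m i 0 q mod gcd (m l) r = t}"
      by (rule card_S) (use r0 il assms(3,5,7) gi in auto)
    also have "\<dots> = card {q. q < r \<and> ((q+1)*m i) mod r mod n = t}"
      unfolding yv_def gi assms(5) by (simp only: div_by_1 add_0)
    also have "\<dots> = r div n"
      by (rule count1) (use gi r0 n0 nd assms(7) in \<open>auto simp: coprime_iff_gcd_eq_1\<close>)
    finally show "real (card {p. admissible 3 r m (i, 0) (l, t) p \<and>
                          (\<forall>x \<in> path_vertices r m p. fst x \<in> {i, l})}) = real r / real n"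
      using rr by simp
  next
    assume li: "l < i"
    have gi: "gcd (m i) r = 1" using assms(6)[of i] li assms(4) by simp
    have "card {p. admissible 3 r m (l, t) (i, 0) p \<and> (\<forall>x \<in> path_vertices r m p. fst x \<in> {l, i})}
       = card {q. q < r div gcd (m l) r \<and> yv r m l t q mod gcd (m i) r = 0}"
      by (rule card_S) (use r0 li assms(4,5,7) gi in auto)
    also have "\<dots> = card {..<r div n}"
      unfolding yv_def gi assms(5) by (simp only: mod_by_1 lessThan_def simp_thms)
    also have "\<dots> = r div n" by simp
    finally show "real (card {p. admissible 3 r m (l, t) (i, 0) p \<and>
                          (\<forall>x \<in> path_vertices r m p. fst x \<in> {l, i})}) = real r / real n"
      using rr by simp
  qed
qed

end
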